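(* Let $f : X \to \mathbb{R}$ be arbitrary, and suppose there exist $r \in \mathbb{R}$ and a Cantor set $C \subseteq X$ such that, in the subspace topology of $C$, the set $C \cap \{f \ge r\}$ is meagre and dense in $C$. Then Player I has a winning strategy in $\Gamma(f)$.
   Context: Let $A$ be a non-empty countable set and $T$ a pruned tree on $A$ (a set of finite sequences of elements of $A$, closed under initial segments, in which every sequence has a proper extension in $T$). Let $X$ be the set of infinite branches of $T$, with the topology generated by the cylinder sets $O(s) = \{x \in X : s \text{ is an initial segment of } x\}$, $s \in T$. A Cantor set is a subset homeomorphic to the middle-thirds Cantor set. $\{f \ge r\} = \{x \in X : f(x) \ge r\}$. The game $\Gamma(f)$: Player I and Player II alternate, Player I moving first; Player I plays $x_0, x_1, \dots \in A$ subject to $(x_0,\dots,x_t) \in T$ for all $t$, and after each move $x_t$ Player II plays a real number $v_t$. Player II wins the run iff $f(x_0,x_1,\dots) = \limsup_{t\to\infty} v_t$; otherwise Player I wins. *)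

theory Defs
  imports "HOL-Analysis.Analysis" "HOL-Library.Extended_Real"
begin

definition is_tree_on :: "'a set \<Rightarrow> 'a list set \<Rightarrow> bool" where
  "is_tree_on A T \<longleftrightarrow> T \<subseteq> lists A \<and> (\<forall>s\<in>T. \<forall>n. take n s \<in> T)"

definition pruned :: "'a list set \<Rightarrow> bool" where
  "pruned T \<longleftrightarrow> (\<forall>s\<in>T. \<exists>t\<in>T. length s < length t \<and> take (length s) t = s)"

definition branches :: "'a list set \<Rightarrow> (nat \<Rightarrow> 'a) set" where
  "branches T = {x. \<forall>n. map x [0..<n] \<in> T}"

definition cylinder :: "'a list set \<Rightarrow> 'a list \<Rightarrow> (nat \<Rightarrow> 'a) set" where
  "cylinder T s = {x \<in> branches T. map x [0..<length s] = s}"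

definition branch_topology :: "'a list set \<Rightarrow> (nat \<Rightarrow> 'a) topology" where
  "branch_topology T = topology_generated_by (cylinder T ` T)"

fun cantor_level :: "nat \<Rightarrow> real set" where
  "cantor_level 0 = {0..1}"
| "cantor_level (Suc n) = (\<lambda>x. x / 3) ` cantor_level n \<union> (\<lambda>x. x / 3 + 2 / 3) ` cantor_level n"

definition middle_thirds_cantor :: "real set" where
  "middle_thirds_cantor = (\<Inter>n. cantor_level n)"

definition is_cantor_set :: "'b topology \<Rightarrow> 'b set \<Rightarrow> bool" where
  "is_cantor_set X C \<longleftrightarrow> C \<subseteq> topspace X \<and>
     (subtopology X C) homeomorphic_space (top_of_set middle_thirds_cantor)"

definition nowhere_dense_in :: "'b topology \<Rightarrow> 'b set \<Rightarrow> bool" where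
  "nowhere_dense_in X S \<longleftrightarrow> S \<subseteq> topspace X \<and> X interior_of (X closure_of S) = {}"

definition meagre_in :: "'b topology \<Rightarrow> 'b set \<Rightarrow> bool" where
  "meagre_in X S \<longleftrightarrow> S \<subseteq> topspace X \<and>
     (\<exists>F :: nat \<Rightarrow> 'b set. (\<forall>n. nowhere_dense_in X (F n)) \<and> S \<subseteq> (\<Union>n. F n))"

definition dense_in :: "'b topology \<Rightarrow> 'b set \<Rightarrow> bool" where
  "dense_in X S \<longleftrightarrow> S \<subseteq> topspace X \<and> X closure_of S = topspace X"

text \<open>A strategy for Player I maps the history
  (I's moves x_0..x_{t-1}, II's moves v_0..v_{t-1}) to I's next move x_t.
  playI sigma v n is the list of I's first n moves when II plays v.\<close>
fun playI :: "('a list \<Rightarrow> real list \<Rightarrow> 'a) \<Rightarrow> (nat \<Rightarrow> real) \<Rightarrow> nat \<Rightarrow> 'a list" where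
  "playI \<sigma> v 0 = []"
| "playI \<sigma> v (Suc n) = playI \<sigma> v n @ [\<sigma> (playI \<sigma> v n) (map v [0..<n])]"

definition runI :: "('a list \<Rightarrow> real list \<Rightarrow> 'a) \<Rightarrow> (nat \<Rightarrow> real) \<Rightarrow> nat \<Rightarrow> 'a" where
  "runI \<sigma> v t = playI \<sigma> v (Suc t) ! t"

text \<open>sigma is winning for Player I: against every sequence of moves of Player II
  (every strategy of II produces such a sequence, and every sequence is produced
  by some strategy) all of I's moves are legal and f(x) differs from limsup v_t
  (the limsup taken in the extended reals).\<close>
definition winning_strategy_I ::
  "'a list set \<Rightarrow> ((nat \<Rightarrow> 'a) \<Rightarrow> real) \<Rightarrow> ('a list \<Rightarrow> real list \<Rightarrow> 'a) \<Rightarrow> bool" where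
  "winning_strategy_I T f \<sigma> \<longleftrightarrow>
     (\<forall>v :: nat \<Rightarrow> real. (\<forall>n. playI \<sigma> v n \<in> T) \<and>
        ereal (f (runI \<sigma> v)) \<noteq> limsup (\<lambda>t. ereal (v t)))"

end

theory Submission imports Defs begin

lemma compact_cantor_level: "compact (cantor_level n)"
proof (induction n)
  case 0 then show ?case by simp
next
  case (Suc n)
  have "compact ((\<lambda>x. x / 3) ` cantor_level n)"
    by (intro compact_continuous_image continuous_intros Suc) auto
  moreover have "compact ((\<lambda>x. x / 3 + 2/3) ` cantor_level n)"
    by (intro compact_continuous_image continuous_intros Suc) auto
  ultimately show ?case by (simp add: compact_Un)
qed

lemma compact_mtc: "compact middle_thirds_cantor"
  unfolding middle_thirds_cantor_def
  by (rule compact_Inter) (auto simp: compact_cantor_level)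

lemma zero_cantor_level: "(0::real) \<in> cantor_level n"
  by (induction n) (auto intro: image_eqI[where x=0])

lemma mtc_ne: "middle_thirds_cantor \<noteq> {}"
  unfolding middle_thirds_cantor_def using zero_cantor_level by blast

lemma cyl_prefix: "cylinder T (map y [0..<n]) = {z \<in> branches T. \<forall>i<n. z i = y i}"
  unfolding cylinder_def by (auto simp: map_eq_conv)

lemma topspace_B: "topspace (branch_topology T) \<subseteq> branches T"
  unfolding branch_topology_def by (auto simp: cylinder_def)

lemma branch_prefix: "y \<in> branches T \<Longrightarrow> map y [0..<n] \<in> T"
  unfolding branches_def by auto

lemma open_cyl: "y \<in> branches T \<Longrightarrow> openin (branch_topology T) (cylinder T (map y [0..<n]))"
  unfolding branch_topology_def
  by (rule topology_generated_by_Basis) (auto simp: branch_prefix)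

lemma base_gen:
  "generate_topology_on (cylinder T ` T) U \<Longrightarrow> \<forall>y\<in>U. \<exists>n. \<forall>z\<in>branches T. (\<forall>i<n. z i = y i) \<longrightarrow> z \<in> U"
proof (induction rule: generate_topology_on.induct)
  case Empty then show ?case by simp
next
  case (Int a b)
  show ?case
  proof
    fix y assume "y \<in> a \<inter> b"
    then obtain n1 n2 where "\<forall>z\<in>branches T. (\<forall>i<n1. z i = y i) \<longrightarrow> z \<in> a"
      "\<forall>z\<in>branches T. (\<forall>i<n2. z i = y i) \<longrightarrow> z \<in> b" using Int.IH by blast
    then show "\<exists>n. \<forall>z\<in>branches T. (\<forall>i<n. z i = y i) \<longrightarrow> z \<in> a \<inter> b"
      by (intro exI[of _ "max n1 n2"]) auto
  qed
next
  case (UN K)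
  show ?case
  proof
    fix y assume "y \<in> \<Union>K"
    then obtain k where "k \<in> K" "y \<in> k" by blast
    with UN.IH obtain n where "\<forall>z\<in>branches T. (\<forall>i<n. z i = y i) \<longrightarrow> z \<in> k" by blast
    with \<open>k \<in> K\<close> show "\<exists>n. \<forall>z\<in>branches T. (\<forall>i<n. z i = y i) \<longrightarrow> z \<in> \<Union>K" by blast
  qed
next
  case (Basis s)
  then obtain t where t: "t \<in> T" "s = cylinder T t" by blast
  show ?case
  proof
    fix y assume "y \<in> s"
    then have y: "map y [0..<length t] = t" using t by (auto simp: cylinder_def)
    show "\<exists>n. \<forall>z\<in>branches T. (\<forall>i<n. z i = y i) \<longrightarrow> z \<in> s"
    proof (intro exI[of _ "length t"] ballI impI)
      fix z assume "z \<in> branches T" "\<forall>i<length t. z i = y i"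
      then have "map z [0..<length t] = map y [0..<length t]" by simp
      then have "map z [0..<length t] = t" using y by simp
      then show "z \<in> s" using t \<open>z \<in> branches T\<close> by (auto simp: cylinder_def)
    qed
  qed
qed

lemma base:
  "openin (branch_topology T) U \<Longrightarrow> y \<in> U \<Longrightarrow> \<exists>n. \<forall>z\<in>branches T. (\<forall>i<n. z i = y i) \<longrightarrow> z \<in> U"
  unfolding branch_topology_def openin_topology_generated_by_iff using base_gen by blast

lemma hausdorff_B: "Hausdorff_space (branch_topology T)"
  unfolding Hausdorff_space_def
proof (intro allI impI)
  fix x y assume a: "x \<in> topspace (branch_topology T) \<and> y \<in> topspace (branch_topology T) \<and> x \<noteq> y"
  then have xb: "x \<in> branches T" and yb: "y \<in> branches T" using topspace_B by blast+
  from a obtain i where i: "x i \<noteq> y i" by blast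
  show "\<exists>U V. openin (branch_topology T) U \<and> openin (branch_topology T) V \<and> x \<in> U \<and> y \<in> V \<and> disjnt U V"
    apply (rule exI[of _ "cylinder T (map x [0..<Suc i])"])
    apply (rule exI[of _ "cylinder T (map y [0..<Suc i])"])
    using open_cyl[OF xb, of "Suc i"] open_cyl[OF yb, of "Suc i"] xb yb i
    unfolding cyl_prefix by (auto simp: disjnt_def)
qed


fun stv :: "(nat \<Rightarrow> (nat \<Rightarrow> 'a) \<Rightarrow> nat \<Rightarrow> (nat \<Rightarrow> 'a) \<times> nat) \<Rightarrow> (nat \<Rightarrow> 'a) \<Rightarrow> real \<Rightarrow> (nat \<Rightarrow> real) \<Rightarrow> nat \<Rightarrow> nat \<times> (nat \<Rightarrow> 'a) \<times> nat" where
  "stv E d0 r v 0 = (0, d0, 0)"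
| "stv E d0 r v (Suc n) = (if r - 1 / (real (fst (stv E d0 r v n)) + 1) < v n
     then (Suc (fst (stv E d0 r v n)), E (fst (stv E d0 r v n)) (fst (snd (stv E d0 r v n))) (max (Suc n) (snd (snd (stv E d0 r v n)))))
     else stv E d0 r v n)"

lemma stv_cong: "(\<forall>i<n. v i = w i) \<Longrightarrow> stv E d0 r v n = stv E d0 r w n"
  by (induction n) auto

locale game =
  fixes E :: "nat \<Rightarrow> (nat \<Rightarrow> 'a) \<Rightarrow> nat \<Rightarrow> (nat \<Rightarrow> 'a) \<times> nat"
    and d0 :: "nat \<Rightarrow> 'a" and r :: real and G :: "(nat \<Rightarrow> 'a) set"
  assumes d0G: "d0 \<in> G"
    and EG: "\<And>k d m. d \<in> G \<Longrightarrow> fst (E k d m) \<in> G \<and> m \<le> snd (E k d m) \<and> (\<forall>i<m. fst (E k d m) i = d i)"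
begin

definition kk where "kk v n = fst (stv E d0 r v n)"
definition dd where "dd v n = fst (snd (stv E d0 r v n))"
definition LL where "LL v n = snd (snd (stv E d0 r v n))"

definition sigma :: "'a list \<Rightarrow> real list \<Rightarrow> 'a" where
  "sigma xs vs = dd (\<lambda>i. vs ! i) (length vs) (length vs)"

lemma kk0: "kk v 0 = 0" by (simp add: kk_def)

lemma sw: "r - 1 / (real (kk v n) + 1) < v n \<Longrightarrow>
   kk v (Suc n) = Suc (kk v n) \<and> dd v (Suc n) = fst (E (kk v n) (dd v n) (max (Suc n) (LL v n)))
   \<and> LL v (Suc n) = snd (E (kk v n) (dd v n) (max (Suc n) (LL v n)))"
  by (simp add: kk_def dd_def LL_def)

lemma nsw: "\<not> r - 1 / (real (kk v n) + 1) < v n \<Longrightarrow>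
   kk v (Suc n) = kk v n \<and> dd v (Suc n) = dd v n \<and> LL v (Suc n) = LL v n"
  by (simp add: kk_def dd_def LL_def)

lemma ddG: "dd v n \<in> G"
proof (induction n)
  case 0 then show ?case using d0G by (simp add: dd_def)
next
  case (Suc n) then show ?case using sw[of v n] nsw[of v n] EG by (cases "r - 1 / (real (kk v n) + 1) < v n") auto
qed

lemma LL_step: "LL v n \<le> LL v (Suc n)"
  using sw[of v n] nsw[of v n] EG[OF ddG, of "kk v n" v n "max (Suc n) (LL v n)"]
  by (cases "r - 1 / (real (kk v n) + 1) < v n") auto

lemma LL_mono: "n \<le> m \<Longrightarrow> LL v n \<le> LL v m"
  using LL_step by (metis lift_Suc_mono_le)

lemma kk_step: "kk v n \<le> kk v (Suc n) \<and> kk v (Suc n) \<le> Suc (kk v n)"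
  using sw[of v n] nsw[of v n] by (cases "r - 1 / (real (kk v n) + 1) < v n") auto

lemma kk_mono: "n \<le> m \<Longrightarrow> kk v n \<le> kk v m"
  using kk_step by (metis lift_Suc_mono_le)

lemma dd_step: "i < max (Suc n) (LL v n) \<Longrightarrow> dd v (Suc n) i = dd v n i"
  using sw[of v n] nsw[of v n] EG[OF ddG, of "kk v n" v n "max (Suc n) (LL v n)"]
  by (cases "r - 1 / (real (kk v n) + 1) < v n") auto

lemma dd_agree: "n \<le> m \<Longrightarrow> i < max n (LL v n) \<Longrightarrow> dd v m i = dd v n i"
proof (induction m rule: dec_induct)
  case base then show ?case by simp
next
  case (step m)
  have "LL v n \<le> LL v m" using LL_mono step.hyps(1) .
  then have "i < max (Suc m) (LL v m)" using step.prems step.hyps(1) by auto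
  then show ?case using dd_step step by simp
qed

definition xx where "xx v i = dd v i i"

lemma xx_agree: "i < max n (LL v n) \<Longrightarrow> xx v i = dd v n i"
proof (cases "i < n")
  case True
  have "dd v n i = dd v (Suc i) i" using True by (intro dd_agree) auto
  also have "\<dots> = dd v i i" by (rule dd_step) auto
  finally show ?thesis by (simp add: xx_def)
next
  case False
  assume "i < max n (LL v n)"
  then have "dd v (Suc i) i = dd v n i" using False by (intro dd_agree) auto
  also have "dd v (Suc i) i = dd v i i" by (rule dd_step) auto
  finally show ?thesis by (simp add: xx_def)
qed

lemma playI_eq: "playI sigma v n = map (xx v) [0..<n]"
proof (induction n)
  case 0 then show ?case by simp
next
  case (Suc n)
  have "stv E d0 r (\<lambda>i. map v [0..<n] ! i) n = stv E d0 r v n"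
    by (rule stv_cong) auto
  then have "sigma (playI sigma v n) (map v [0..<n]) = xx v n"
    by (simp add: sigma_def dd_def xx_def)
  then show ?case using Suc by simp
qed

lemma runI_eq: "runI sigma v = xx v"
proof
  fix t
  have "runI sigma v t = map (xx v) [0..<Suc t] ! t" unfolding runI_def playI_eq ..
  also have "\<dots> = xx v t" by (simp only: nth_map_upt) simp
  finally show "runI sigma v t = xx v t" .
qed

lemma kk_hit:
  assumes "\<forall>K. \<exists>n. K < kk v n"
  shows "\<exists>n. kk v n = j \<and> kk v (Suc n) = Suc j"
proof -
  define m0 where "m0 = (LEAST m. j < kk v m)"
  have m0: "j < kk v m0" unfolding m0_def using assms by (meson LeastI_ex)
  have "m0 \<noteq> 0" using m0 kk0[of v] by (metis not_less0)
  then obtain n where n: "m0 = Suc n" by (cases m0) auto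
  have "\<not> j < kk v n" using n m0_def not_less_Least by (metis lessI)
  then show ?thesis using m0 n kk_step[of v n] by (intro exI[of _ n]) auto
qed

lemma kk_hit_late:
  assumes "\<forall>K. \<exists>n. K < kk v n"
  shows "\<exists>n\<ge>N. K \<le> kk v n \<and> kk v (Suc n) = Suc (kk v n)"
proof -
  obtain n where n: "kk v n = max K (kk v N)" "kk v (Suc n) = Suc (max K (kk v N))"
    using kk_hit[OF assms] by blast
  have "N \<le> n"
  proof (rule ccontr)
    assume "\<not> N \<le> n"
    then have "kk v (Suc n) \<le> kk v N" by (intro kk_mono) auto
    then show False using n by simp
  qed
  then show ?thesis using n by (intro exI[of _ n]) auto
qed

end
lemma limsup_upper: "\<forall>n\<ge>N. v n \<le> c \<Longrightarrow> limsup (\<lambda>t. ereal (v t)) \<le> ereal c"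
  unfolding limsup_INF_SUP
  by (rule order_trans[OF INF_lower[of N]]) (auto intro!: SUP_least)

lemma limsup_lower:
  assumes "\<forall>K N. \<exists>n\<ge>N. r - 1/(real K+1) < v n"
  shows "ereal r \<le> limsup (\<lambda>t. ereal (v t))"
  unfolding limsup_INF_SUP
proof (rule INF_greatest)
  fix N :: nat assume "N \<in> UNIV"
  let ?S = "SUP m\<in>{N..}. ereal (v m)"
  show "ereal r \<le> ?S"
  proof (rule ereal_le_epsilon2)
    fix e :: real assume e: "0 < e"
    obtain K :: nat where K: "1 / (real K + 1) < e"
      using e by (metis nat_approx_posE of_nat_Suc add.commute)
    obtain n where n: "n \<ge> N" "r - 1/(real K+1) < v n" using assms by blast
    have "ereal (r - 1/(real K+1)) \<le> ?S"
      using n by (intro SUP_upper2[of n]) auto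
    then have "ereal (r - 1/(real K+1)) + ereal e \<le> ?S + ereal e" by (rule add_right_mono)
    moreover have "ereal r \<le> ereal (r - 1/(real K+1)) + ereal e" using K by simp
    ultimately show "ereal r \<le> ?S + ereal e" by order
  qed
qed

theorem mainTheorem8:
  fixes A :: "'a set" and T :: "'a list set" and f :: "(nat \<Rightarrow> 'a) \<Rightarrow> real"
    and r :: real and C :: "(nat \<Rightarrow> 'a) set"
  assumes "A \<noteq> {}" and "countable A"
    and "is_tree_on A T" and "pruned T"
    and "is_cantor_set (branch_topology T) C"
    and "meagre_in (subtopology (branch_topology T) C) (C \<inter> {x \<in> branches T. f x \<ge> r})"
    and "dense_in (subtopology (branch_topology T) C) (C \<inter> {x \<in> branches T. f x \<ge> r})"
  shows "\<exists>\<sigma>. winning_strategy_I T f \<sigma>"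
proof -
  define B where "B = branch_topology T"
  define D where "D = C \<inter> {x \<in> branches T. f x \<ge> r}"
  define S where "S = subtopology B C"
  have CB: "C \<subseteq> topspace B" and hom: "S homeomorphic_space (top_of_set middle_thirds_cantor)"
    using assms(5) unfolding is_cantor_set_def B_def S_def by auto
  have Cbr: "C \<subseteq> branches T" using CB topspace_B unfolding B_def by blast
  have topS: "topspace S = C" using CB unfolding S_def by auto
  obtain F :: "nat \<Rightarrow> (nat \<Rightarrow> 'a) set" where Fnd: "\<And>n. nowhere_dense_in S (F n)" and DF: "D \<subseteq> (\<Union>n. F n)"
    using assms(6) unfolding meagre_in_def D_def S_def B_def by blast
  have clD: "S closure_of D = C"
    using assms(7) topS unfolding dense_in_def D_def S_def B_def by auto
  have Cne: "C \<noteq> {}"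
    using homeomorphic_empty_space[OF hom] topS mtc_ne
    by (metis null_topspace_iff_trivial topspace_euclidean_subtopology)
  have Dne: "D \<noteq> {}" using clD Cne by auto
  have DC: "D \<subseteq> C" unfolding D_def by auto
  have "compact_space (top_of_set middle_thirds_cantor)"
    using compact_mtc by (simp add: compact_space_subtopology)
  then have "compact_space S" using homeomorphic_compact_space[OF hom] by simp
  then have "compactin B C" using CB unfolding S_def by (simp add: compactin_subspace)
  then have Cclosed: "closedin B C"
    using hausdorff_B unfolding B_def by (intro compactin_imp_closedin) (auto simp: B_def)
  define Q where "Q = (\<lambda>k (d::nat\<Rightarrow>'a) m (p :: (nat \<Rightarrow> 'a) \<times> nat). fst p \<in> D \<and> m \<le> snd p \<and>
      (\<forall>i<m. fst p i = d i) \<and> (\<forall>z\<in>C. (\<forall>i<snd p. z i = fst p i) \<longrightarrow> z \<notin> F k))"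
  have step: "\<exists>p. Q k d m p" if dC: "d \<in> C" for k d m
  proof -
    have db: "d \<in> branches T" using dC Cbr by blast
    define U where "U = C \<inter> cylinder T (map d [0..<m])"
    have Uo: "openin S U" unfolding U_def S_def B_def
      using open_cyl[OF db] by (intro openin_subtopology_Int2)
    have dU: "d \<in> U" unfolding U_def using dC db by (simp add: cyl_prefix)
    have "S interior_of (S closure_of F k) = {}" using Fnd[of k] by (simp add: nowhere_dense_in_def)
    then have "\<not> U \<subseteq> S closure_of F k" using interior_of_maximal[OF _ Uo] dU by blast
    then obtain y where yU: "y \<in> U" and ycl: "y \<notin> S closure_of F k" by blast
    have yC: "y \<in> C" using yU U_def by blast
    then obtain W where yW: "y \<in> W" and Wo: "openin S W" and WF: "\<forall>z. z \<in> F k \<longrightarrow> z \<notin> W"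
      using ycl topS unfolding in_closure_of by blast
    from Wo obtain V where Vo: "openin B V" and WV: "W = V \<inter> C"
      unfolding S_def openin_subtopology by blast
    from base[OF Vo[unfolded B_def]] yW WV obtain n where
      n: "\<forall>z\<in>branches T. (\<forall>i<n. z i = y i) \<longrightarrow> z \<in> V" by blast
    define L where "L = max n m"
    have yb: "y \<in> branches T" using yC Cbr by blast
    have ym: "\<forall>i<m. y i = d i" using yU unfolding U_def by (simp add: cyl_prefix)
    have "y \<in> S closure_of D" using clD yC by simp
    moreover have "openin S (C \<inter> cylinder T (map y [0..<L]))" unfolding S_def B_def
      using open_cyl[OF yb] by (intro openin_subtopology_Int2)
    moreover have "y \<in> C \<inter> cylinder T (map y [0..<L])" using yC yb by (simp add: cyl_prefix)
    ultimately obtain d' where d'D: "d' \<in> D" and d'c: "d' \<in> cylinder T (map y [0..<L])"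
      unfolding in_closure_of by blast
    have d'y: "\<forall>i<L. d' i = y i" using d'c by (simp add: cyl_prefix)
    show ?thesis unfolding Q_def
    proof (intro exI[of _ "(d', L)"], simp, intro conjI)
      show "d' \<in> D" by fact
      show "m \<le> L" by (simp add: L_def)
      show "\<forall>i<m. d' i = d i" using d'y ym by (simp add: L_def)
      show "\<forall>z\<in>C. (\<forall>i<L. z i = d' i) \<longrightarrow> z \<notin> F k"
      proof (intro ballI impI)
        fix z assume zC: "z \<in> C" and za: "\<forall>i<L. z i = d' i"
        then have "z \<in> V" using n Cbr d'y by (auto simp: L_def)
        then have "z \<in> W" using WV zC by blast
        then show "z \<notin> F k" using WF by blast
      qed
    qed
  qed
  define E where "E = (\<lambda>k d m. SOME p. Q k d m p)"
  have EQ: "Q k d m (E k d m)" if "d \<in> C" for k d m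
    unfolding E_def using step[OF that] by (rule someI_ex)
  obtain d0 where d0: "d0 \<in> D" using Dne by blast
  interpret game E d0 r D
  proof
    show "d0 \<in> D" by fact
    fix k d m assume "d \<in> D"
    then show "fst (E k d m) \<in> D \<and> m \<le> snd (E k d m) \<and> (\<forall>i<m. fst (E k d m) i = d i)"
      using EQ[of d k m] DC unfolding Q_def by auto
  qed
  show ?thesis
  proof (intro exI[of _ sigma], unfold winning_strategy_I_def, intro allI)
    fix v :: "nat \<Rightarrow> real"
    have xd: "\<forall>i<n. xx v i = dd v n i" for n using xx_agree by auto
    have P1: "\<forall>n. playI sigma v n \<in> T"
    proof
      fix n
      have "playI sigma v n = map (dd v n) [0..<n]" using playI_eq xd by simp
      moreover have "dd v n \<in> branches T" using ddG DC Cbr by blast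
      ultimately show "playI sigma v n \<in> T" by (simp add: branch_prefix)
    qed
    have P2: "ereal (f (runI sigma v)) \<noteq> limsup (\<lambda>t. ereal (v t))"
    proof (cases "\<exists>K. \<forall>n. kk v n \<le> K")
      case True
      then obtain K where K: "\<forall>n. kk v n \<le> K" by blast
      have fin: "finite (range (kk v))"
        by (rule finite_subset[of _ "{..K}"]) (use K in auto)
      define M where "M = Max (range (kk v))"
      have "M \<in> range (kk v)" unfolding M_def using fin by (intro Max_in) auto
      then obtain N where N: "kk v N = M" by auto
      have const: "kk v n = M" if "n \<ge> N" for n
      proof -
        have "kk v n \<le> M" unfolding M_def using fin by (intro Max_ge) auto
        moreover have "kk v N \<le> kk v n" using kk_mono[OF that] .
        ultimately show ?thesis using N by linarith
      qed
      have nosw: "\<not> r - 1 / (real M + 1) < v n" if "n \<ge> N" for n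
      proof
        assume a: "r - 1 / (real M + 1) < v n"
        have "kk v n = M" using const that by blast
        moreover have "kk v (Suc n) = M" using const that by simp
        ultimately show False using sw[of v n] a by simp
      qed
      have dconst: "dd v n = dd v N" if "n \<ge> N" for n
        using that
      proof (induction n rule: dec_induct)
        case base then show ?case by simp
      next
        case (step n)
        have "kk v n = M" using const step.hyps(1) by blast
        then have "\<not> r - 1 / (real (kk v n) + 1) < v n" using nosw step.hyps(1) by simp
        then show ?case using nsw[of v n] step.IH by simp
      qed
      have xeq: "xx v = dd v N"
      proof
        fix i show "xx v i = dd v N i"
        proof (cases "i < N")
          case True then show ?thesis using xd by auto
        next
          case False then show ?thesis using dconst[of i] by (simp add: xx_def)
        qed
      qed
      have "dd v N \<in> D" by (rule ddG)
      then have fx: "r \<le> f (xx v)" using xeq D_def by simp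
      have "limsup (\<lambda>t. ereal (v t)) \<le> ereal (r - 1 / (real M + 1))"
        using nosw by (intro limsup_upper[of N]) (auto simp: not_less)
      also have "\<dots> < ereal (f (xx v))"
      proof -
        have h: "0 < 1 / (real M + 1)" by simp
        have "r - 1 / (real M + 1) < f (xx v)" using fx h by linarith
        then show ?thesis by simp
      qed
      finally show ?thesis using runI_eq by auto
    next
      case False
      then have unb: "\<forall>K. \<exists>n. K < kk v n" by (auto simp: not_le)
      have xb: "xx v \<in> branches T"
      proof -
        have "map (xx v) [0..<n] \<in> T" for n
        proof -
          have "map (xx v) [0..<n] = map (dd v n) [0..<n]" using xd by simp
          moreover have "dd v n \<in> branches T" using ddG DC Cbr by blast
          ultimately show ?thesis using branch_prefix by metis
        qed
        then show ?thesis unfolding branches_def by simp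
      qed
      have "xx v \<in> B closure_of C"
        unfolding in_closure_of
      proof (intro conjI allI impI)
        have "map (xx v) [0..<0] \<in> T" using xb by (rule branch_prefix)
        then have e: "[] \<in> T" by simp
        have "xx v \<in> cylinder T []" using xb by (simp add: cylinder_def)
        then show "xx v \<in> topspace B"
          using e unfolding B_def branch_topology_def by auto
        fix W assume "xx v \<in> W \<and> openin B W"
        then obtain p where p: "\<forall>z\<in>branches T. (\<forall>i<p. z i = xx v i) \<longrightarrow> z \<in> W"
          using base unfolding B_def by blast
        have "dd v p \<in> C" using ddG DC by blast
        moreover have "dd v p \<in> W" using p xd \<open>dd v p \<in> C\<close> Cbr by auto
        ultimately show "\<exists>y. y \<in> C \<and> y \<in> W" by blast
      qed
      then have xC: "xx v \<in> C" using closure_of_closedin[OF Cclosed] by simp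
      have "xx v \<notin> F j" for j
      proof -
        obtain n where n: "kk v n = j" "kk v (Suc n) = Suc j" using kk_hit[OF unb] by blast
        then have swn: "r - 1 / (real (kk v n) + 1) < v n" using nsw[of v n] by auto
        have Qn: "Q (kk v n) (dd v n) (max (Suc n) (LL v n)) (E (kk v n) (dd v n) (max (Suc n) (LL v n)))"
          using EQ ddG DC by blast
        have "\<forall>i<LL v (Suc n). xx v i = dd v (Suc n) i" using xx_agree by auto
        then show ?thesis using Qn sw[OF swn] n xC unfolding Q_def by auto
      qed
      then have "xx v \<notin> D" using DF by blast
      then have fx: "f (xx v) < r" using xC xb D_def by auto
      have "\<forall>K N. \<exists>n\<ge>N. r - 1/(real K+1) < v n"
      proof (intro allI)
        fix K N
        obtain n where n: "n \<ge> N" "K \<le> kk v n" "kk v (Suc n) = Suc (kk v n)"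
          using kk_hit_late[OF unb] by blast
        then have "r - 1 / (real (kk v n) + 1) < v n" using nsw[of v n] by auto
        moreover have "1 / (real (kk v n) + 1) \<le> 1 / (real K + 1)"
          using n(2) by (intro divide_left_mono) auto
        ultimately show "\<exists>n\<ge>N. r - 1/(real K+1) < v n" using n(1) by (intro exI[of _ n]) auto
      qed
      then have m2: "ereal r \<le> limsup (\<lambda>t. ereal (v t))" by (rule limsup_lower)
      have m1: "ereal (f (xx v)) < ereal r" using fx by simp
      have "ereal (f (xx v)) < limsup (\<lambda>t. ereal (v t))" using less_le_trans[OF m1 m2] .
      then have "ereal (f (xx v)) \<noteq> limsup (\<lambda>t. ereal (v t))" by (rule less_imp_neq)
      then show ?thesis using runI_eq by simp
    qed
    show "(\<forall>n. playI sigma v n \<in> T) \<and> ereal (f (runI sigma v)) \<noteq> limsup (\<lambda>t. ereal (v t))"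
      using P1 P2 by blast
  qed
qed
end
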